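(* Let $(G,\sigma)$ be a finite connected signed graph and $p>1$. Then the first (smallest) nonzero eigenvalue $\lambda_p^\sigma$ of the signed $p$-Laplacian $\Delta_p^\sigma$ satisfies \[ \lambda_{p}^{\sigma}\geq\frac{1}{2}\left(\frac{2}{p\cdot \mathrm{vol}(G)}\right)^{p}, \] where $\mathrm{vol}(G)=\sum_{x\in V}d_x$.
   Context: $G=(V,E)$ is a finite simple connected graph with degrees $d_x$; $\sigma:E\to\{\pm1\}$, $\sigma_{xy}=\sigma(\{x,y\})$. For $p>1$, $\Delta_{p}^{\sigma}f(x)=\frac{1}{d_{x}}\sum_{y\sim x}|\sigma_{xy}f(y)-f(x)|^{p-2}(\sigma_{xy}f(y)-f(x))$ (with $|t|^{p-2}t=0$ at $t=0$). A real $\lambda$ is an eigenvalue of $\Delta_p^\sigma$ if there is a nonzero $f$ with $-\Delta_{p}^{\sigma}f(x)=\lambda|f(x)|^{p-2}f(x)$ for all $x\in V$. *)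

theory Defs
  imports Complex_Main
begin

definition simple_graph :: "'a set \<Rightarrow> 'a set set \<Rightarrow> bool" where
  "simple_graph V E \<longleftrightarrow> finite V \<and>
     (\<forall>e\<in>E. \<exists>x y. e = {x, y} \<and> x \<in> V \<and> y \<in> V \<and> x \<noteq> y)"

definition adj :: "'a set set \<Rightarrow> 'a \<Rightarrow> 'a \<Rightarrow> bool" where
  "adj E x y \<longleftrightarrow> {x, y} \<in> E"

definition neighbors :: "'a set \<Rightarrow> 'a set set \<Rightarrow> 'a \<Rightarrow> 'a set" where
  "neighbors V E x = {y \<in> V. adj E x y}"

definition degree :: "'a set \<Rightarrow> 'a set set \<Rightarrow> 'a \<Rightarrow> nat" where
  "degree V E x = card (neighbors V E x)"

definition connected_graph :: "'a set \<Rightarrow> 'a set set \<Rightarrow> bool" where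
  "connected_graph V E \<longleftrightarrow> V \<noteq> {} \<and>
     (\<forall>x\<in>V. \<forall>y\<in>V. (x, y) \<in> {(u, v). u \<in> V \<and> v \<in> V \<and> adj E u v}\<^sup>*)"

definition signature :: "'a set set \<Rightarrow> ('a set \<Rightarrow> real) \<Rightarrow> bool" where
  "signature E \<sigma> \<longleftrightarrow> (\<forall>e\<in>E. \<sigma> e = 1 \<or> \<sigma> e = -1)"

definition vol :: "'a set \<Rightarrow> 'a set set \<Rightarrow> real" where
  "vol V E = (\<Sum>x\<in>V. real (degree V E x))"

definition phi :: "real \<Rightarrow> real \<Rightarrow> real" where
  "phi p t = (if t = 0 then 0 else \<bar>t\<bar> powr (p - 2) * t)"

definition signed_p_laplacian ::
  "real \<Rightarrow> 'a set \<Rightarrow> 'a set set \<Rightarrow> ('a set \<Rightarrow> real) \<Rightarrow> ('a \<Rightarrow> real) \<Rightarrow> 'a \<Rightarrow> real" where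
  "signed_p_laplacian p V E \<sigma> f x =
     (1 / real (degree V E x)) * (\<Sum>y\<in>neighbors V E x. phi p (\<sigma> {x, y} * f y - f x))"

definition is_eigenvalue ::
  "real \<Rightarrow> 'a set \<Rightarrow> 'a set set \<Rightarrow> ('a set \<Rightarrow> real) \<Rightarrow> real \<Rightarrow> bool" where
  "is_eigenvalue p V E \<sigma> lam \<longleftrightarrow>
     (\<exists>f :: 'a \<Rightarrow> real. (\<exists>x\<in>V. f x \<noteq> 0) \<and>
        (\<forall>x\<in>V. - signed_p_laplacian p V E \<sigma> f x = lam * phi p (f x)))"

end

theory Submission
  imports Defs "HOL-Analysis.Convex"
begin

lemma phi_mult: "phi p t * t = \<bar>t\<bar> powr p"
proof (cases "t = 0")
  case False
  have "\<bar>t\<bar> powr p = \<bar>t\<bar> powr (p - 2) * \<bar>t\<bar> powr 2"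
    using powr_add[of "\<bar>t\<bar>" "p - 2" 2] by simp
  also have "\<bar>t\<bar> powr 2 = t * t" using False by (simp add: powr_numeral power2_eq_square)
  finally show ?thesis using False by (simp add: phi_def)
qed (simp add: phi_def)

lemma phi_scale: "c = 1 \<or> c = -1 \<Longrightarrow> phi p (c * t) = c * phi p t"
  by (auto simp: phi_def)

lemma sgn_phi: "sgn t * phi p t = \<bar>t\<bar> powr (p - 1)"
proof (cases "t = 0")
  case False
  have "\<bar>t\<bar> powr (p - 1) = \<bar>t\<bar> powr (p - 2) * \<bar>t\<bar> powr 1"
    using powr_add[of "\<bar>t\<bar>" "p - 2" 1] by simp
  then show ?thesis using False by (auto simp: phi_def sgn_if)
qed (simp add: phi_def)

lemma jensen_pos:
  fixes t :: "nat \<Rightarrow> real"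
  assumes "finite I" "I \<noteq> {}" "\<And>i. i \<in> I \<Longrightarrow> t i > 0" "p \<ge> 1"
  shows "(\<Sum>i\<in>I. t i) powr p \<le> real (card I) powr (p - 1) * (\<Sum>i\<in>I. t i powr p)"
proof -
  define n where "n = real (card I)"
  have n0: "n > 0" using assms by (simp add: n_def card_gt_0_iff)
  have "(\<lambda>x. x powr p) (\<Sum>i\<in>I. (1/n) *\<^sub>R t i) \<le> (\<Sum>i\<in>I. (1/n) * (\<lambda>x. x powr p) (t i))"
    by (rule convex_on_sum[OF assms(1,2) powr_convex[OF assms(4)]]; use assms n0 in \<open>auto simp: n_def\<close>)
  hence "((\<Sum>i\<in>I. t i) / n) powr p \<le> (1/n) * (\<Sum>i\<in>I. t i powr p)"
    by (simp add: sum_distrib_left[symmetric] divide_inverse mult.commute)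
  moreover have "((\<Sum>i\<in>I. t i) / n) powr p = (\<Sum>i\<in>I. t i) powr p / n powr p"
    by (rule powr_divide; use assms n0 in \<open>auto intro: sum_nonneg less_imp_le\<close>)
  ultimately have "(\<Sum>i\<in>I. t i) powr p \<le> n powr p * ((1/n) * (\<Sum>i\<in>I. t i powr p))"
    using n0 by (simp add: divide_le_eq mult.commute)
  also have "n powr p * ((1/n) * (\<Sum>i\<in>I. t i powr p)) = n powr (p - 1) * (\<Sum>i\<in>I. t i powr p)"
    using n0 by (simp add: powr_diff)
  finally show ?thesis by (simp add: n_def)
qed

lemma jensen:
  fixes t :: "nat \<Rightarrow> real"
  assumes "finite I" "\<And>i. i \<in> I \<Longrightarrow> t i \<ge> 0" "p \<ge> 1"
  shows "(\<Sum>i\<in>I. t i) powr p \<le> real (card I) powr (p - 1) * (\<Sum>i\<in>I. t i powr p)"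
proof -
  define J where "J = {i\<in>I. t i > 0}"
  have pos: "t i > 0" if "i \<in> I" "t i \<noteq> 0" for i using assms(2)[of i] that by linarith
  have JI: "J \<subseteq> I" "finite J" using assms by (auto simp: J_def)
  have s1: "(\<Sum>i\<in>I. t i) = (\<Sum>i\<in>J. t i)"
    by (rule sum.mono_neutral_right) (use assms pos in \<open>auto simp: J_def\<close>)
  have s2: "(\<Sum>i\<in>I. t i powr p) = (\<Sum>i\<in>J. t i powr p)"
    by (rule sum.mono_neutral_right) (use assms pos in \<open>auto simp: J_def\<close>)
  have nn: "0 \<le> (\<Sum>i\<in>I. t i powr p)" by (simp add: sum_nonneg)
  show ?thesis
  proof (cases "J = {}")
    case True
    then show ?thesis using s1 nn by simp
  next
    case False
    have "(\<Sum>i\<in>J. t i) powr p \<le> real (card J) powr (p - 1) * (\<Sum>i\<in>J. t i powr p)"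
      by (rule jensen_pos) (use JI False assms in \<open>auto simp: J_def\<close>)
    also have "\<dots> \<le> real (card I) powr (p - 1) * (\<Sum>i\<in>J. t i powr p)"
      apply (rule mult_right_mono)
      using card_mono[OF assms(1) JI(1)] False JI assms
      by (auto intro!: powr_mono2 sum_nonneg simp: card_gt_0_iff)
    finally show ?thesis using s1 s2 by simp
  qed
qed

lemma two_powr_le: assumes "p > (1::real)" shows "2 powr (p - 1) \<le> p powr p"
proof -
  have "ln (1/p) \<le> 1/p - 1" by (rule ln_le_minus_one) (use assms in auto)
  hence "ln p \<ge> 1 - 1/p" using assms by (simp add: ln_div)
  hence "p * ln p \<ge> p - 1" using assms by (simp add: field_simps)
  moreover have "(p - 1) * ln 2 \<le> p - 1" using mult_left_mono[of "ln 2" 1 "p - 1"] ln_2_less_1 assms by simp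
  ultimately have "(p - 1) * ln 2 \<le> p * ln p" by linarith
  hence "ln (2 powr (p - 1)) \<le> ln (p powr p)" using assms by simp
  thus ?thesis using assms by (subst ln_le_cancel_iff[symmetric]) auto
qed


theorem theorem4p3:
  fixes V :: "'a set" and E :: "'a set set" and \<sigma> :: "'a set \<Rightarrow> real" and p :: real
  assumes "simple_graph V E" and "connected_graph V E" and "signature E \<sigma>" and "p > 1"
  shows "\<forall>lam::real. is_eigenvalue p V E \<sigma> lam \<and> lam \<noteq> 0 \<longrightarrow>
           lam \<ge> (1/2) * (2 / (p * vol V E)) powr p"
proof (intro allI impI)
  fix lam assume "is_eigenvalue p V E \<sigma> lam \<and> lam \<noteq> 0"
  then obtain f where fnz: "\<exists>x\<in>V. f x \<noteq> 0"
    and eq: "\<And>x. x \<in> V \<Longrightarrow> - signed_p_laplacian p V E \<sigma> f x = lam * phi p (f x)"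
    and lam0: "lam \<noteq> 0" unfolding is_eigenvalue_def by blast
  have finV: "finite V" using assms(1) by (simp add: simple_graph_def)
  define nb where "nb = neighbors V E"
  define d where "d = (\<lambda>x. real (degree V E x))"
  have nb_def': "nb x = {y\<in>V. adj E x y}" for x by (simp add: nb_def neighbors_def)
  have finnb: "finite (nb x)" for x using finV by (simp add: nb_def')
  have d_card: "d x = real (card (nb x))" for x by (simp add: d_def degree_def nb_def)
  have adj_sym: "adj E x y = adj E y x" for x y by (simp add: adj_def insert_commute)
  have adj_irr: "\<not> adj E x x" for x
  proof
    assume "adj E x x"
    then have "{x} \<in> E" by (simp add: adj_def)
    then obtain a b where "{x} = {a, b}" "a \<noteq> b" using assms(1) unfolding simple_graph_def by blast
    then show False by (metis insertCI singletonD)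
  qed
  have sig: "\<sigma> {x,y} = 1 \<or> \<sigma> {x,y} = -1" if "adj E x y" for x y
    using assms(3) that by (simp add: signature_def adj_def)
  have sigsym: "\<sigma> {y,x} = \<sigma> {x,y}" for x y by (simp add: insert_commute)
  define t where "t = (\<lambda>x y. \<sigma> {x,y} * f y - f x)"
  have t_swap: "t y x = (- \<sigma> {x,y}) * t x y" if "adj E x y" for x y
    using sig[OF that] by (auto simp: t_def sigsym algebra_simps)
  have phi_swap: "phi p (t y x) = (- \<sigma> {x,y}) * phi p (t x y)" if "adj E x y" for x y
    unfolding t_swap[OF that] by (rule phi_scale) (use sig[OF that] in auto)
  have abs_swap: "\<bar>t y x\<bar> = \<bar>t x y\<bar>" if "adj E x y" for x y
    using t_swap[OF that] sig[OF that] by (auto simp: abs_mult)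
  have swap: "(\<Sum>x\<in>V. \<Sum>y\<in>nb x. F x y) = (\<Sum>x\<in>V. \<Sum>y\<in>nb x. F y x)" for F :: "'a \<Rightarrow> 'a \<Rightarrow> real"
  proof -
    have "(\<Sum>x\<in>V. \<Sum>y\<in>nb x. F x y) = (\<Sum>y\<in>V. \<Sum>x | x \<in> V \<and> adj E x y. F x y)"
      unfolding nb_def' by (rule sum.swap_restrict[OF finV finV])
    also have "\<dots> = (\<Sum>y\<in>V. \<Sum>x\<in>nb y. F x y)" unfolding nb_def' using adj_sym by simp
    finally show ?thesis .
  qed
  have eq1: "- (\<Sum>y\<in>nb x. phi p (t x y)) = lam * d x * phi p (f x)" if "x \<in> V" for x
  proof (cases "d x = 0")
    case True
    then have "nb x = {}" using finnb[of x] by (simp add: d_card)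
    then show ?thesis using True by simp
  next
    case False
    have "- ((1 / d x) * (\<Sum>y\<in>nb x. phi p (t x y))) = lam * phi p (f x)"
      using eq[OF that] by (simp add: signed_p_laplacian_def nb_def d_def t_def)
    then show ?thesis using False by (simp add: field_simps)
  qed
  have Vne: "V \<noteq> {}" using fnz by blast
  obtain x0 where x0V: "x0 \<in> V" and x0eq: "\<bar>f x0\<bar> = Max ((\<lambda>y. \<bar>f y\<bar>) ` V)"
  proof -
    have "Max ((\<lambda>y. \<bar>f y\<bar>) ` V) \<in> (\<lambda>y. \<bar>f y\<bar>) ` V"
      using finV Vne by (intro Max_in) auto
    then show ?thesis using that by (metis (no_types, lifting) imageE)
  qed
  have x0max: "\<bar>f y\<bar> \<le> \<bar>f x0\<bar>" if "y \<in> V" for y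
    unfolding x0eq using finV that by (intro Max_ge) auto
  define M where "M = \<bar>f x0\<bar>"
  have M0: "M > 0" using fnz x0max unfolding M_def by fastforce
  have phi_nz: "phi p s \<noteq> 0" if "s \<noteq> 0" for s using that by (simp add: phi_def)
  have dx0: "d x0 > 0"
  proof (rule ccontr)
    assume "\<not> d x0 > 0"
    then have "d x0 = 0" by (simp add: d_def)
    then have "nb x0 = {}" using finnb[of x0] by (simp add: d_card)
    then have "lam * phi p (f x0) = 0" using eq[OF x0V] by (simp add: signed_p_laplacian_def nb_def)
    then show False using lam0 phi_nz[of "f x0"] M0 by (simp add: M_def)
  qed
  define D where "D = (\<Sum>x\<in>V. d x * \<bar>f x\<bar> powr p)"
  define Q where "Q = (\<Sum>x\<in>V. \<Sum>y\<in>nb x. \<bar>t x y\<bar> powr p)"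
  have E1: "(\<Sum>x\<in>V. \<Sum>y\<in>nb x. f x * phi p (t x y)) = - lam * D"
  proof -
    have "(\<Sum>x\<in>V. \<Sum>y\<in>nb x. f x * phi p (t x y)) = (\<Sum>x\<in>V. f x * (\<Sum>y\<in>nb x. phi p (t x y)))"
      by (simp add: sum_distrib_left)
    also have "\<dots> = (\<Sum>x\<in>V. - lam * (d x * \<bar>f x\<bar> powr p))"
    proof (rule sum.cong[OF refl])
      fix x assume "x \<in> V"
      have "f x * (\<Sum>y\<in>nb x. phi p (t x y)) = - (lam * d x * (phi p (f x) * f x))"
      proof -
        have h: "(\<Sum>y\<in>nb x. phi p (t x y)) = - (lam * d x * phi p (f x))"
          using eq1[OF \<open>x \<in> V\<close>] by linarith
        show ?thesis unfolding h by (simp add: algebra_simps)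
      qed
      then show "f x * (\<Sum>y\<in>nb x. phi p (t x y)) = - lam * (d x * \<bar>f x\<bar> powr p)"
        by (simp add: phi_mult)
    qed
    finally show ?thesis by (simp add: D_def sum_distrib_left)
  qed
  have E2: "(\<Sum>x\<in>V. \<Sum>y\<in>nb x. f x * phi p (t x y)) = (\<Sum>x\<in>V. \<Sum>y\<in>nb x. - \<sigma> {x,y} * f y * phi p (t x y))"
  proof -
    have "(\<Sum>x\<in>V. \<Sum>y\<in>nb x. f x * phi p (t x y)) = (\<Sum>x\<in>V. \<Sum>y\<in>nb x. f y * phi p (t y x))"
      by (rule swap)
    also have "\<dots> = (\<Sum>x\<in>V. \<Sum>y\<in>nb x. - \<sigma> {x,y} * f y * phi p (t x y))"
      by (intro sum.cong refl) (simp add: phi_swap nb_def')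
    finally show ?thesis .
  qed
  have energy: "lam * D = Q / 2"
  proof -
    have "2 * (- lam * D) = (\<Sum>x\<in>V. \<Sum>y\<in>nb x. f x * phi p (t x y) + (- \<sigma> {x,y} * f y * phi p (t x y)))"
      unfolding sum.distrib using E1 E2 by linarith
    also have "\<dots> = (\<Sum>x\<in>V. \<Sum>y\<in>nb x. - (phi p (t x y) * t x y))"
      by (intro sum.cong refl) (simp add: t_def algebra_simps)
    also have "\<dots> = - Q" by (simp add: phi_mult Q_def sum_negf)
    finally show ?thesis by simp
  qed
  define R where "R = {(u, v). u \<in> V \<and> v \<in> V \<and> adj E u v}"
  have conn: "(x, y) \<in> R\<^sup>*" if "x \<in> V" "y \<in> V" for x y
    using assms(2) that unfolding connected_graph_def R_def by blast
  have R_nb: "(x, y) \<in> R \<longleftrightarrow> x \<in> V \<and> y \<in> nb x" for x y by (auto simp: R_def nb_def')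
  have R_sym: "(y, x) \<in> R" if "(x, y) \<in> R" for x y using that adj_sym by (auto simp: R_def)
  have sg_pos: "sgn (f x) * phi p (f x) = \<bar>f x\<bar> powr (p - 1)" for x by (rule sgn_phi)
  have good: "\<exists>a b. (a, b) \<in> R \<and> \<sigma> {a,b} * f a * f b \<le> 0"
  proof (rule ccontr)
    assume ng: "\<not> (\<exists>a b. (a, b) \<in> R \<and> \<sigma> {a,b} * f a * f b \<le> 0)"
    have fnz_all: "f z \<noteq> 0" if "z \<in> V" for z
    proof
      assume fz: "f z = 0"
      then have "z \<noteq> x0" using M0 by (auto simp: M_def)
      from conn[OF x0V that] this obtain y where "(y, z) \<in> R"
        by (metis rtranclE)
      moreover have "\<sigma> {y,z} * f y * f z \<le> 0" using fz by simp
      ultimately show False using ng by blast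
    qed
    have sgnrel: "sgn (f y) * \<sigma> {x,y} = sgn (f x)" if "x \<in> V" "y \<in> nb x" for x y
    proof -
      have xy: "(x, y) \<in> R" using that R_nb by auto
      then have pos: "\<sigma> {x,y} * f x * f y > 0" using ng by force
      have "adj E x y" using xy by (simp add: R_def)
      then have s: "\<sigma> {x,y} = 1 \<or> \<sigma> {x,y} = -1" by (rule sig)
      show ?thesis using s pos
        by (elim disjE; cases "f x > 0"; cases "f y > 0") (auto simp: sgn_if mult_less_0_iff zero_less_mult_iff)
    qed
    define S where "S = (\<Sum>x\<in>V. \<Sum>y\<in>nb x. sgn (f x) * phi p (t x y))"
    have "S = (\<Sum>x\<in>V. \<Sum>y\<in>nb x. sgn (f y) * phi p (t y x))" unfolding S_def by (rule swap)
    also have "\<dots> = (\<Sum>x\<in>V. \<Sum>y\<in>nb x. - (sgn (f x) * phi p (t x y)))"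
    proof (intro sum.cong refl)
      fix x y assume "x \<in> V" "y \<in> nb x"
      then have "adj E x y" by (simp add: nb_def')
      then show "sgn (f y) * phi p (t y x) = - (sgn (f x) * phi p (t x y))"
        using phi_swap sgnrel[OF \<open>x \<in> V\<close> \<open>y \<in> nb x\<close>]
        by (metis (no_types, lifting) mult.assoc mult_minus_left mult_minus_right)
    qed
    also have "\<dots> = - S" by (simp add: S_def sum_negf)
    finally have S0: "S = 0" by simp
    have "S = (\<Sum>x\<in>V. - lam * (d x * \<bar>f x\<bar> powr (p - 1)))"
      unfolding S_def
    proof (intro sum.cong refl)
      fix x assume "x \<in> V"
      have h: "(\<Sum>y\<in>nb x. phi p (t x y)) = - (lam * d x * phi p (f x))"
        using eq1[OF \<open>x \<in> V\<close>] by linarith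
      have "(\<Sum>y\<in>nb x. sgn (f x) * phi p (t x y)) = sgn (f x) * (\<Sum>y\<in>nb x. phi p (t x y))"
        by (simp add: sum_distrib_left)
      also have "\<dots> = - lam * (d x * (sgn (f x) * phi p (f x)))" unfolding h by (simp add: algebra_simps)
      finally show "(\<Sum>y\<in>nb x. sgn (f x) * phi p (t x y)) = - lam * (d x * \<bar>f x\<bar> powr (p - 1))"
        by (simp add: sg_pos)
    qed
    then have "lam * (\<Sum>x\<in>V. d x * \<bar>f x\<bar> powr (p - 1)) = 0"
      using S0 by (simp add: sum_distrib_left sum_negf)
    moreover have "(\<Sum>x\<in>V. d x * \<bar>f x\<bar> powr (p - 1)) > 0"
    proof -
      have "d x0 * \<bar>f x0\<bar> powr (p - 1) > 0" using dx0 M0 by (simp add: M_def)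
      also have "\<dots> \<le> (\<Sum>x\<in>V. d x * \<bar>f x\<bar> powr (p - 1))"
        by (rule member_le_sum) (use x0V finV in \<open>auto simp: d_def\<close>)
      finally show ?thesis .
    qed
    ultimately show False using lam0 by simp
  qed
  define G where "G = (\<lambda>a b. \<sigma> {a,b} * f a * f b \<le> 0)"
  have G_sym: "G b a = G a b" for a b by (simp add: G_def sigsym mult.commute mult.left_commute)
  define P where "P = (\<lambda>n. \<exists>w. w 0 = x0 \<and> (\<forall>i\<le>n. (w i, w (Suc i)) \<in> R) \<and> G (w n) (w (Suc n)))"
  have "\<exists>n. P n"
  proof -
    obtain a b where ab: "(a, b) \<in> R" "G a b" using good by (auto simp: G_def)
    then have "a \<in> V" by (simp add: R_def)
    then obtain m where "(x0, a) \<in> R ^^ m" using conn[OF x0V] rtrancl_imp_relpow by blast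
    then obtain u where u: "u 0 = x0" "u m = a" "\<And>i. i < m \<Longrightarrow> (u i, u (Suc i)) \<in> R"
      by (auto simp: relpow_fun_conv)
    define w where "w = (\<lambda>k. if k \<le> m then u k else b)"
    have "P m" unfolding P_def
    proof (intro exI[of _ w] conjI allI impI)
      show "w 0 = x0" using u by (simp add: w_def)
      fix i assume "i \<le> m"
      then show "(w i, w (Suc i)) \<in> R"
        using u ab by (cases "i = m") (auto simp: w_def)
    next
      show "G (w m) (w (Suc m))" using u ab by (simp add: w_def)
    qed
    then show ?thesis by blast
  qed
  define n0 where "n0 = (LEAST n. P n)"
  have Pn0: "P n0" unfolding n0_def using \<open>\<exists>n. P n\<close> by (metis LeastI_ex)
  have minP: "\<not> P k" if "k < n0" for k using not_less_Least[of k P] that by (simp add: n0_def)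
  obtain w where w0: "w 0 = x0" and wR: "\<And>i. i \<le> n0 \<Longrightarrow> (w i, w (Suc i)) \<in> R"
    and wG: "G (w n0) (w (Suc n0))" using Pn0 unfolding P_def by blast
  have winj: "w i \<noteq> w j" if "i < j" "j \<le> Suc n0" for i j
  proof
    assume wij: "w i = w j"
    show False
    proof (cases "j \<le> n0")
      case True
      define w' where "w' = (\<lambda>k. if k < i then w k else w (k + (j - i)))"
      have "P (n0 - (j - i))" unfolding P_def
      proof (intro exI[of _ w'] conjI allI impI)
        show "w' 0 = x0" using w0 wij by (cases "i = 0") (auto simp: w'_def)
        fix k assume k: "k \<le> n0 - (j - i)"
        show "(w' k, w' (Suc k)) \<in> R"
        proof (cases "Suc k < i")
          case True
          then show ?thesis using wR[of k] that by (simp add: w'_def)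
        next
          case F: False
          show ?thesis
          proof (cases "Suc k = i")
            case True
            then have "w' k = w k" "w' (Suc k) = w (Suc k)" using wij that by (auto simp: w'_def)
            then show ?thesis using wR[of k] True that by simp
          next
            case False
            then have "k \<ge> i" using F by simp
            then have "w' k = w (k + (j - i))" "w' (Suc k) = w (Suc (k + (j - i)))"
              by (auto simp: w'_def)
            moreover have "k + (j - i) \<le> n0" using k that True by simp
            ultimately show ?thesis using wR by simp
          qed
        qed
      next
        have ge: "n0 - (j - i) \<ge> i" using True that by simp
        then have "w' (n0 - (j - i)) = w n0" "w' (Suc (n0 - (j - i))) = w (Suc n0)"
          using True that by (auto simp: w'_def)
        then show "G (w' (n0 - (j - i))) (w' (Suc (n0 - (j - i))))" using wG by simp
      qed
      moreover have "n0 - (j - i) < n0" using that True by simp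
      ultimately show False using minP by blast
    next
      case False
      then have j: "j = Suc n0" using that by simp
      show False
      proof (cases "i = n0")
        case True
        then have "(w n0, w n0) \<in> R" using wR[of n0] wij j by simp
        then show False using adj_irr by (simp add: R_def)
      next
        case False
        then have i: "i < n0" using that j by simp
        define w' where "w' = (\<lambda>k. if k \<le> i then w k else w n0)"
        have "P i" unfolding P_def
        proof (intro exI[of _ w'] conjI allI impI)
          show "w' 0 = x0" using w0 by (simp add: w'_def)
          fix k assume k: "k \<le> i"
          show "(w' k, w' (Suc k)) \<in> R"
          proof (cases "k < i")
            case True
            then show ?thesis using wR[of k] i by (simp add: w'_def)
          next
            case False
            then have "k = i" using k by simp
            then show ?thesis using R_sym[OF wR[of n0]] wij j by (simp add: w'_def)
          qed
        next
          show "G (w' i) (w' (Suc i))" using wG wij j G_sym by (simp add: w'_def)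
        qed
        then show False using minP i by blast
      qed
    qed
  qed
  define L where "L = Suc n0"
  define T where "T = (\<lambda>i. \<bar>t (w i) (w (Suc i))\<bar>)"
  have wadj: "adj E (w i) (w (Suc i))" "w i \<in> V" "w (Suc i) \<in> V" if "i < L" for i
    using wR[of i] that by (auto simp: R_def L_def)
  have ineq1: "\<bar>t a b\<bar> \<ge> \<bar>f a\<bar> - \<bar>f b\<bar>" if "adj E a b" for a b
    using sig[OF that] by (auto simp: t_def)
  have ineq2: "\<bar>t a b\<bar> \<ge> \<bar>f a\<bar>" if "adj E a b" "G a b" for a b
    using sig[OF that(1)] that(2)
    by (elim disjE; cases "f a \<ge> 0"; cases "f b \<ge> 0") (auto simp: t_def G_def mult_le_0_iff zero_le_mult_iff)
  have sumbound: "M \<le> (\<Sum>i<L. T i)"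
  proof -
    have "(\<Sum>i<n0. \<bar>f (w i)\<bar> - \<bar>f (w (Suc i))\<bar>) \<le> (\<Sum>i<n0. T i)"
      by (rule sum_mono) (use wadj ineq1 in \<open>auto simp: T_def L_def\<close>)
    moreover have "(\<Sum>i<n0. \<bar>f (w i)\<bar> - \<bar>f (w (Suc i))\<bar>) = \<bar>f (w 0)\<bar> - \<bar>f (w n0)\<bar>"
      by (rule sum_lessThan_telescope')
    moreover have "\<bar>f (w n0)\<bar> \<le> T n0" using ineq2[OF wadj(1)[of n0] ] wG by (simp add: T_def L_def)
    ultimately show ?thesis by (simp add: L_def M_def w0)
  qed
  have Tnn: "T i \<ge> 0" for i by (simp add: T_def)
  have Tjen: "M powr p \<le> real L powr (p - 1) * (\<Sum>i<L. T i powr p)"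
  proof -
    have "M powr p \<le> (\<Sum>i<L. T i) powr p" using sumbound M0 assms(4) by (intro powr_mono2) auto
    also have "\<dots> \<le> real (card {..<L}) powr (p - 1) * (\<Sum>i<L. T i powr p)"
      by (rule jensen) (use Tnn assms(4) in auto)
    finally show ?thesis by simp
  qed
  have winj': "inj_on w {..L}"
  proof (rule inj_onI)
    fix i j assume "i \<in> {..L}" "j \<in> {..L}" "w i = w j"
    then show "i = j" using winj[of i j] winj[of j i] by (cases i j rule: linorder_cases) (auto simp: L_def)
  qed
  have Qbound: "2 * (\<Sum>i<L. T i powr p) \<le> Q"
  proof -
    define g where "g = (\<lambda>(x, y). \<bar>t x y\<bar> powr p)"
    define S1 where "S1 = (\<lambda>i. (w i, w (Suc i))) ` {..<L}"
    define S2 where "S2 = (\<lambda>i. (w (Suc i), w i)) ` {..<L}"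
    have inj1: "inj_on (\<lambda>i. (w i, w (Suc i))) {..<L}"
      using winj' by (auto simp: inj_on_def)
    have inj2: "inj_on (\<lambda>i. (w (Suc i), w i)) {..<L}"
      using winj' by (auto simp: inj_on_def)
    have disj: "S1 \<inter> S2 = {}"
    proof -
      have False if "i < L" "j < L" "w i = w (Suc j)" "w (Suc i) = w j" for i j
      proof -
        have "i = Suc j" using winj' that by (auto simp: inj_on_def)
        moreover have "Suc i = j" using winj' that by (auto simp: inj_on_def)
        ultimately show False by simp
      qed
      then show ?thesis by (auto simp: S1_def S2_def)
    qed
    have sub: "S1 \<union> S2 \<subseteq> Sigma V nb"
      using wadj adj_sym by (auto simp: S1_def S2_def nb_def')
    have finSig: "finite (Sigma V nb)" using finV finnb by simp
    have s1: "sum g S1 = (\<Sum>i<L. T i powr p)"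
      unfolding S1_def by (subst sum.reindex[OF inj1]) (simp add: g_def T_def)
    have s2: "sum g S2 = (\<Sum>i<L. T i powr p)"
      unfolding S2_def by (subst sum.reindex[OF inj2]) (auto intro!: sum.cong simp: g_def T_def abs_swap wadj)
    have "sum g S1 + sum g S2 = sum g (S1 \<union> S2)"
      by (rule sum.union_disjoint[symmetric]) (use disj finSig sub in \<open>auto intro: finite_subset\<close>)
    also have "\<dots> \<le> sum g (Sigma V nb)"
      by (rule sum_mono2[OF finSig sub]) (auto simp: g_def)
    also have "sum g (Sigma V nb) = Q"
      unfolding Q_def g_def by (subst sum.Sigma) (use finV finnb in auto)
    finally show ?thesis using s1 s2 by simp
  qed
  define vl where "vl = vol V E"
  have vl_sum: "vl = (\<Sum>x\<in>V. d x)" by (simp add: vl_def vol_def d_def)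
  have Lvol: "real L \<le> vl"
  proof -
    have injL: "inj_on w {..<L}" using winj' by (rule inj_on_subset) auto
    have WV: "w ` {..<L} \<subseteq> V" using wadj by auto
    have d1: "d x \<ge> 1" if xin: "x \<in> w ` {..<L}" for x
    proof -
      obtain i where i: "i < L" "x = w i" using xin by auto
      have "w (Suc i) \<in> nb x" using wadj[OF i(1)] i by (simp add: nb_def')
      then have "card (nb x) \<ge> 1" using finnb[of x] by (metis One_nat_def Suc_leI card_gt_0_iff empty_iff)
      then show ?thesis by (simp add: d_card)
    qed
    have "real L = (\<Sum>x\<in>w ` {..<L}. 1)" using card_image[OF injL] by simp
    also have "\<dots> \<le> (\<Sum>x\<in>w ` {..<L}. d x)" by (rule sum_mono) (rule d1)
    also have "\<dots> \<le> (\<Sum>x\<in>V. d x)"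
      by (rule sum_mono2[OF finV WV]) (auto simp: d_def)
    finally show ?thesis by (simp add: vl_sum)
  qed
  define K where "K = M powr p"
  have K0: "K > 0" using M0 by (simp add: K_def)
  have L1: "real L \<ge> 1" by (simp add: L_def)
  have vl1: "vl \<ge> 1" using Lvol L1 by simp
  have Dle: "D \<le> vl * K"
  proof -
    have p0: "0 \<le> p" using assms(4) by simp
    have "D \<le> (\<Sum>x\<in>V. d x * K)" unfolding D_def K_def
      by (rule sum_mono, rule mult_left_mono) (auto intro!: powr_mono2 simp: M_def x0max d_def p0)
    also have "\<dots> = vl * K" by (simp add: vl_sum sum_distrib_right)
    finally show ?thesis .
  qed
  have Dpos: "D > 0"
  proof -
    have "0 < d x0 * \<bar>f x0\<bar> powr p" using dx0 M0 by (simp add: M_def)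
    also have "\<dots> \<le> D" unfolding D_def
      by (rule member_le_sum) (use x0V finV in \<open>auto simp: d_def\<close>)
    finally show ?thesis .
  qed
  have Lp: "real L powr (p - 1) > 0" using L1 by simp
  have "K / real L powr (p - 1) \<le> (\<Sum>i<L. T i powr p)"
    using Tjen Lp by (simp add: K_def divide_le_eq mult.commute)
  also have "\<dots> \<le> lam * D" using Qbound energy by simp
  finally have k1: "K / real L powr (p - 1) \<le> lam * D" .
  have "K / vl powr (p - 1) \<le> K / real L powr (p - 1)"
    using Lvol Lp K0 assms(4) by (intro divide_left_mono powr_mono2 mult_pos_pos) auto
  with k1 have k2: "K / vl powr (p - 1) \<le> lam * D" by linarith
  have lampos: "lam > 0"
  proof -
    have "0 < K / vl powr (p - 1)" using K0 vl1 by simp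
    then have "lam * D > 0" using k2 by linarith
    then show ?thesis using Dpos by (simp add: zero_less_mult_iff)
  qed
  have "lam * D \<le> lam * (vl * K)" using Dle lampos by simp
  with k2 have "K / vl powr (p - 1) \<le> lam * vl * K" by (simp add: mult.assoc)
  then have "K * (1 / vl powr (p - 1)) \<le> K * (lam * vl)" by (simp add: mult_ac)
  then have "1 / vl powr (p - 1) \<le> lam * vl" using K0 by (rule mult_left_le_imp_le)
  then have low: "1 / vl powr p \<le> lam"
    using vl1 by (simp add: powr_diff field_simps)
  have "(1/2) * (2 / (p * vl)) powr p = (2 powr p / 2) / p powr p * (1 / vl powr p)"
    using vl1 assms(4) by (simp add: powr_divide powr_mult)
  also have "2 powr p / 2 = 2 powr (p - 1)" by (simp add: powr_diff)
  also have "2 powr (p - 1) / p powr p * (1 / vl powr p) \<le> 1 * (1 / vl powr p)"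
    using two_powr_le[OF assms(4)] assms(4) vl1 by (intro mult_right_mono) auto
  finally have fin: "(1/2) * (2 / (p * vl)) powr p \<le> 1 * (1 / vl powr p)" .
  show "(1/2) * (2 / (p * vol V E)) powr p \<le> lam" using fin[unfolded vl_def] low[unfolded vl_def] by linarith
qed

end
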